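(* The price of anarchy (supremum over all weights $w_1,w_2\ge0$ with $w_1+w_2>0$ and all instances, with respect to pure Nash equilibria) for symmetric simultaneous two-player weighted network routing games with affine costs and uniform cost functions is equal to $2$.
   Context: A weighted two-player network routing game with affine costs consists of a directed graph whose arcs $r$ are resources with coefficients $\alpha_r,\beta_r\ge0$, two players $i=1,2$ with weights $w_i\ge0$, each with a source $s_i$ and a sink $t_i$; the actions $\mathcal{A}_i$ of player $i$ are the arc sets of directed $s_i$–$t_i$ paths. It is symmetric if both players have the same source and the same sink. For an action profile $A=(A_1,A_2)$ the load of arc $r$ is $x_r(A)=\sum_{j:\, r\in A_j} w_j$. With uniform costs, player $i$ pays $C_i(A)=\sum_{r\in A_i}(\alpha_r+\beta_r x_r(A))$. The social cost is $C(A)=C_1(A)+C_2(A)$. A pure Nash equilibrium is a profile from which no player can lower her cost by unilaterally changing her action. The price of anarchy of an instance is the maximum over Nash equilibria $A$ of $C(A)/\min_{A'} C(A')$; the price of anarchy of a class is the supremum over all instances (with positive optimal social cost). *)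

theory Defs
  imports Complex_Main "HOL-Library.Extended_Real"
begin

text \<open>Directed multigraph: arcs are natural numbers in a finite set E, with tail and head
  maps into vertices (natural numbers). Parallel arcs are allowed.\<close>

fun walk :: "(nat \<Rightarrow> nat) \<Rightarrow> (nat \<Rightarrow> nat) \<Rightarrow> nat set \<Rightarrow> nat \<Rightarrow> nat \<Rightarrow> nat list \<Rightarrow> bool" where
  "walk tail head E u v [] = (u = v)"
| "walk tail head E u v (e # es) = (e \<in> E \<and> tail e = u \<and> walk tail head E (head e) v es)"

definition acts :: "(nat \<Rightarrow> nat) \<Rightarrow> (nat \<Rightarrow> nat) \<Rightarrow> nat set \<Rightarrow> nat \<Rightarrow> nat \<Rightarrow> nat set set" where
  "acts tail head E s t = {set es | es. walk tail head E s t es \<and> distinct (s # map head es)}"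

definition load :: "real \<Rightarrow> real \<Rightarrow> nat set \<Rightarrow> nat set \<Rightarrow> nat \<Rightarrow> real" where
  "load w1 w2 A1 A2 r = (if r \<in> A1 then w1 else 0) + (if r \<in> A2 then w2 else 0)"

definition pcost :: "(nat \<Rightarrow> real) \<Rightarrow> (nat \<Rightarrow> real) \<Rightarrow> real \<Rightarrow> real \<Rightarrow> nat set \<Rightarrow> nat set \<Rightarrow> nat set \<Rightarrow> real" where
  "pcost \<alpha> \<beta> w1 w2 A1 A2 Ai = (\<Sum>r\<in>Ai. \<alpha> r + \<beta> r * load w1 w2 A1 A2 r)"

definition cost1 where "cost1 \<alpha> \<beta> w1 w2 A1 A2 = pcost \<alpha> \<beta> w1 w2 A1 A2 A1"
definition cost2 where "cost2 \<alpha> \<beta> w1 w2 A1 A2 = pcost \<alpha> \<beta> w1 w2 A1 A2 A2"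

definition social :: "(nat \<Rightarrow> real) \<Rightarrow> (nat \<Rightarrow> real) \<Rightarrow> real \<Rightarrow> real \<Rightarrow> nat set \<Rightarrow> nat set \<Rightarrow> real" where
  "social \<alpha> \<beta> w1 w2 A1 A2 = cost1 \<alpha> \<beta> w1 w2 A1 A2 + cost2 \<alpha> \<beta> w1 w2 A1 A2"

definition is_NE :: "nat set set \<Rightarrow> (nat \<Rightarrow> real) \<Rightarrow> (nat \<Rightarrow> real) \<Rightarrow> real \<Rightarrow> real \<Rightarrow> nat set \<Rightarrow> nat set \<Rightarrow> bool" where
  "is_NE Acts \<alpha> \<beta> w1 w2 A1 A2 \<longleftrightarrow>
     A1 \<in> Acts \<and> A2 \<in> Acts \<and>
     (\<forall>B\<in>Acts. cost1 \<alpha> \<beta> w1 w2 A1 A2 \<le> cost1 \<alpha> \<beta> w1 w2 B A2) \<and>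
     (\<forall>B\<in>Acts. cost2 \<alpha> \<beta> w1 w2 A1 A2 \<le> cost2 \<alpha> \<beta> w1 w2 A1 B)"

definition opt :: "nat set set \<Rightarrow> (nat \<Rightarrow> real) \<Rightarrow> (nat \<Rightarrow> real) \<Rightarrow> real \<Rightarrow> real \<Rightarrow> real" where
  "opt Acts \<alpha> \<beta> w1 w2 = Min {social \<alpha> \<beta> w1 w2 A1 A2 | A1 A2. A1 \<in> Acts \<and> A2 \<in> Acts}"

definition valid_instance :: "nat set \<Rightarrow> (nat \<Rightarrow> real) \<Rightarrow> (nat \<Rightarrow> real) \<Rightarrow> real \<Rightarrow> real \<Rightarrow> bool" where
  "valid_instance E \<alpha> \<beta> w1 w2 \<longleftrightarrow> finite E \<and> (\<forall>r\<in>E. \<alpha> r \<ge> 0 \<and> \<beta> r \<ge> 0) \<and>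
     w1 \<ge> 0 \<and> w2 \<ge> 0 \<and> w1 + w2 > 0"

text \<open>The price of anarchy of the class is the
  supremum of this set (sup over instances of the max over NE).\<close>
definition PoA_ratios :: "real set" where
  "PoA_ratios = {social \<alpha> \<beta> w1 w2 A1 A2 / opt (acts tail head E s t) \<alpha> \<beta> w1 w2
      | E tail head \<alpha> \<beta> w1 w2 s t A1 A2.
        valid_instance E \<alpha> \<beta> w1 w2 \<and> is_NE (acts tail head E s t) \<alpha> \<beta> w1 w2 A1 A2 \<and>
        opt (acts tail head E s t) \<alpha> \<beta> w1 w2 > 0}"

end

theory Submission
  imports Defs
begin

lemma walk_sub: "walk tail head E u v es \<Longrightarrow> set es \<subseteq> E"
  by (induction es arbitrary: u) auto

lemma acts_sub: "A \<in> acts tail head E s t \<Longrightarrow> A \<subseteq> E"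
  unfolding acts_def using walk_sub by blast

lemma acts_fin: "finite E \<Longrightarrow> finite (acts tail head E s t)"
  by (rule finite_subset[of _ "Pow E"]) (auto dest: acts_sub)

lemma c1_le:
  assumes "\<forall>r\<in>E. \<alpha> r \<ge> 0 \<and> \<beta> r \<ge> 0" "w1 \<ge> 0" "w2 \<ge> 0" "P \<subseteq> E"
  shows "cost1 \<alpha> \<beta> w1 w2 P A2 \<le> (\<Sum>r\<in>P. \<alpha> r) + (w1+w2) * (\<Sum>r\<in>P. \<beta> r)"
proof -
  have "cost1 \<alpha> \<beta> w1 w2 P A2 \<le> (\<Sum>r\<in>P. \<alpha> r + (w1+w2) * \<beta> r)"
    unfolding cost1_def pcost_def
  proof (rule sum_mono)
    fix r assume "r \<in> P"
    then have "\<beta> r \<ge> 0" using assms by auto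
    moreover have "load w1 w2 P A2 r \<le> w1 + w2" using assms by (auto simp: load_def)
    ultimately show "\<alpha> r + \<beta> r * load w1 w2 P A2 r \<le> \<alpha> r + (w1+w2) * \<beta> r"
      by (simp add: mult.commute mult_left_mono)
  qed
  then show ?thesis by (simp add: sum.distrib sum_distrib_left)
qed

lemma c2_le:
  assumes "\<forall>r\<in>E. \<alpha> r \<ge> 0 \<and> \<beta> r \<ge> 0" "w1 \<ge> 0" "w2 \<ge> 0" "P \<subseteq> E"
  shows "cost2 \<alpha> \<beta> w1 w2 A1 P \<le> (\<Sum>r\<in>P. \<alpha> r) + (w1+w2) * (\<Sum>r\<in>P. \<beta> r)"
proof -
  have "cost2 \<alpha> \<beta> w1 w2 A1 P \<le> (\<Sum>r\<in>P. \<alpha> r + (w1+w2) * \<beta> r)"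
    unfolding cost2_def pcost_def
  proof (rule sum_mono)
    fix r assume "r \<in> P"
    then have "\<beta> r \<ge> 0" using assms by auto
    moreover have "load w1 w2 A1 P r \<le> w1 + w2" using assms by (auto simp: load_def)
    ultimately show "\<alpha> r + \<beta> r * load w1 w2 A1 P r \<le> \<alpha> r + (w1+w2) * \<beta> r"
      by (simp add: mult.commute mult_left_mono)
  qed
  then show ?thesis by (simp add: sum.distrib sum_distrib_left)
qed

lemma soc_ge:
  assumes "\<forall>r\<in>E. \<alpha> r \<ge> 0 \<and> \<beta> r \<ge> 0" "w1 \<ge> 0" "w2 \<ge> 0" "B1 \<subseteq> E" "B2 \<subseteq> E"
  shows "social \<alpha> \<beta> w1 w2 B1 B2 \<ge> (\<Sum>r\<in>B1. \<alpha> r) + (\<Sum>r\<in>B2. \<alpha> r)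
      + w1 * (\<Sum>r\<in>B1. \<beta> r) + w2 * (\<Sum>r\<in>B2. \<beta> r)"
proof -
  have 1: "cost1 \<alpha> \<beta> w1 w2 B1 B2 \<ge> (\<Sum>r\<in>B1. \<alpha> r + w1 * \<beta> r)"
    unfolding cost1_def pcost_def
  proof (rule sum_mono)
    fix r assume "r \<in> B1"
    then have "\<beta> r \<ge> 0" using assms by auto
    moreover have "load w1 w2 B1 B2 r \<ge> w1" using assms \<open>r \<in> B1\<close> by (auto simp: load_def)
    ultimately show "\<alpha> r + w1 * \<beta> r \<le> \<alpha> r + \<beta> r * load w1 w2 B1 B2 r"
      by (simp add: mult.commute[of "\<beta> r"] mult_right_mono)
  qed
  have 2: "cost2 \<alpha> \<beta> w1 w2 B1 B2 \<ge> (\<Sum>r\<in>B2. \<alpha> r + w2 * \<beta> r)"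
    unfolding cost2_def pcost_def
  proof (rule sum_mono)
    fix r assume "r \<in> B2"
    then have "\<beta> r \<ge> 0" using assms by auto
    moreover have "load w1 w2 B1 B2 r \<ge> w2" using assms \<open>r \<in> B2\<close> by (auto simp: load_def)
    ultimately show "\<alpha> r + w2 * \<beta> r \<le> \<alpha> r + \<beta> r * load w1 w2 B1 B2 r"
      by (simp add: mult.commute[of "\<beta> r"] mult_right_mono)
  qed
  show ?thesis using 1 2 unfolding social_def by (simp add: sum.distrib sum_distrib_left)
qed

lemma two_le: "(x::real) \<le> y \<Longrightarrow> u \<le> v \<Longrightarrow> y \<le> z \<Longrightarrow> v \<le> z \<Longrightarrow> x + u \<le> 2 * z"
  by linarith

lemma ratio_le:
  assumes vi: "valid_instance E \<alpha> \<beta> w1 w2" and ne: "is_NE (acts tail head E s t) \<alpha> \<beta> w1 w2 A1 A2"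
    and op: "opt (acts tail head E s t) \<alpha> \<beta> w1 w2 > 0"
  shows "social \<alpha> \<beta> w1 w2 A1 A2 / opt (acts tail head E s t) \<alpha> \<beta> w1 w2 \<le> 2"
proof -
  let ?Acts = "acts tail head E s t"
  let ?S = "{social \<alpha> \<beta> w1 w2 A1 A2 | A1 A2. A1 \<in> ?Acts \<and> A2 \<in> ?Acts}"
  have fE: "finite E" and nn: "\<forall>r\<in>E. \<alpha> r \<ge> 0 \<and> \<beta> r \<ge> 0" and w1: "w1 \<ge> 0" and w2: "w2 \<ge> 0"
    and W: "w1 + w2 > 0" using vi unfolding valid_instance_def by auto
  have A1: "A1 \<in> ?Acts" and A2: "A2 \<in> ?Acts" using ne unfolding is_NE_def by auto
  have fin: "finite ?S"
  proof -
    have "?S = (\<lambda>(A1,A2). social \<alpha> \<beta> w1 w2 A1 A2) ` (?Acts \<times> ?Acts)" by auto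
    then show ?thesis using acts_fin[OF fE] by simp
  qed
  have "?S \<noteq> {}" using A1 A2 by auto
  then have "opt ?Acts \<alpha> \<beta> w1 w2 \<in> ?S" unfolding opt_def using fin Min_in by blast
  then obtain B1 B2 where B1: "B1 \<in> ?Acts" and B2: "B2 \<in> ?Acts"
    and ob: "opt ?Acts \<alpha> \<beta> w1 w2 = social \<alpha> \<beta> w1 w2 B1 B2" by auto
  have sB1: "B1 \<subseteq> E" and sB2: "B2 \<subseteq> E" using B1 B2 acts_sub by auto
  define a1 where "a1 = (\<Sum>r\<in>B1. \<alpha> r)"
  define a2 where "a2 = (\<Sum>r\<in>B2. \<alpha> r)"
  define b1 where "b1 = (\<Sum>r\<in>B1. \<beta> r)"
  define b2 where "b2 = (\<Sum>r\<in>B2. \<beta> r)"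
  have a1: "a1 \<ge> 0" unfolding a1_def using nn sB1 by (intro sum_nonneg) auto
  have a2: "a2 \<ge> 0" unfolding a2_def using nn sB2 by (intro sum_nonneg) auto
  let ?SA = "social \<alpha> \<beta> w1 w2 A1 A2"
  let ?SB = "social \<alpha> \<beta> w1 w2 B1 B2"
  have i1: "?SA \<le> 2 * (a1 + (w1+w2) * b1)"
  proof -
    have "cost1 \<alpha> \<beta> w1 w2 A1 A2 \<le> cost1 \<alpha> \<beta> w1 w2 B1 A2"
         "cost2 \<alpha> \<beta> w1 w2 A1 A2 \<le> cost2 \<alpha> \<beta> w1 w2 A1 B1" using ne B1 unfolding is_NE_def by auto
    moreover have "cost1 \<alpha> \<beta> w1 w2 B1 A2 \<le> a1 + (w1+w2)*b1"
      unfolding a1_def b1_def by (rule c1_le[OF nn w1 w2 sB1])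
    moreover have "cost2 \<alpha> \<beta> w1 w2 A1 B1 \<le> a1 + (w1+w2)*b1"
      unfolding a1_def b1_def by (rule c2_le[OF nn w1 w2 sB1])
    ultimately show ?thesis unfolding social_def by (rule two_le)
  qed
  have i2: "?SA \<le> 2 * (a2 + (w1+w2) * b2)"
  proof -
    have "cost1 \<alpha> \<beta> w1 w2 A1 A2 \<le> cost1 \<alpha> \<beta> w1 w2 B2 A2"
         "cost2 \<alpha> \<beta> w1 w2 A1 A2 \<le> cost2 \<alpha> \<beta> w1 w2 A1 B2" using ne B2 unfolding is_NE_def by auto
    moreover have "cost1 \<alpha> \<beta> w1 w2 B2 A2 \<le> a2 + (w1+w2)*b2"
      unfolding a2_def b2_def by (rule c1_le[OF nn w1 w2 sB2])
    moreover have "cost2 \<alpha> \<beta> w1 w2 A1 B2 \<le> a2 + (w1+w2)*b2"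
      unfolding a2_def b2_def by (rule c2_le[OF nn w1 w2 sB2])
    ultimately show ?thesis unfolding social_def by (rule two_le)
  qed
  have i3: "?SB \<ge> a1 + a2 + w1 * b1 + w2 * b2"
    unfolding a1_def a2_def b1_def b2_def by (rule soc_ge[OF nn w1 w2 sB1 sB2])
  have "w1 * ?SA \<le> w1 * (2 * (a1 + (w1+w2) * b1))" using i1 w1 by (rule mult_left_mono)
  moreover have "w2 * ?SA \<le> w2 * (2 * (a2 + (w1+w2) * b2))" using i2 w2 by (rule mult_left_mono)
  moreover have "w1 * a1 + w2 * a2 \<le> (w1+w2) * (a1 + a2)"
    using w1 w2 a1 a2 by (simp add: algebra_simps)
  moreover have "(w1+w2) * (a1 + a2 + w1 * b1 + w2 * b2) \<le> (w1+w2) * ?SB"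
    using i3 W by (intro mult_left_mono) auto
  ultimately have "(w1+w2) * ?SA \<le> (w1+w2) * (2 * ?SB)"
    by (simp add: algebra_simps)
  then have "?SA \<le> 2 * ?SB" using W by simp
  then show ?thesis using op ob by (simp add: divide_le_eq)
qed

definition ex_tail :: "nat \<Rightarrow> nat" where "ex_tail = (\<lambda>_. 0)"
definition ex_head :: "nat \<Rightarrow> nat" where "ex_head = (\<lambda>_. 1)"
definition ex_a :: "nat \<Rightarrow> real" where "ex_a = (\<lambda>r. if r = 0 then 0 else 1)"
definition ex_b :: "nat \<Rightarrow> real" where "ex_b = (\<lambda>r. if r = 0 then 1 else 0)"

lemma ex_acts: "acts ex_tail ex_head {0,1} 0 1 = {{0},{1}}"
proof -
  have "set es \<in> {{0},{1}}" if "walk ex_tail ex_head {0,1} 0 1 es" "distinct (0 # map ex_head es)" for es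
  proof (cases es)
    case Nil then show ?thesis using that by simp
  next
    case (Cons e es')
    then show ?thesis using that by (cases es') (auto simp: ex_tail_def ex_head_def)
  qed
  moreover have "walk ex_tail ex_head {0,1} 0 1 [e]" "distinct (0 # map ex_head [e])" if "e \<in> {0,1}" for e
    using that by (auto simp: ex_tail_def ex_head_def)
  moreover have "{0} = set [0::nat]" "{1} = set [1::nat]" by auto
  ultimately show ?thesis unfolding acts_def by blast
qed

lemma two_in: "2 \<in> PoA_ratios"
proof -
  have opt1: "opt {{0},{1}} ex_a ex_b 1 0 = 1"
  proof -
    have "{social ex_a ex_b 1 0 A1 A2 | A1 A2. A1 \<in> {{0::nat},{1}} \<and> A2 \<in> {{0},{1}}} = {2,1}"
      apply (auto simp: social_def cost1_def cost2_def pcost_def load_def ex_a_def ex_b_def)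
      apply (rule exI[of _ "{0}"], rule exI[of _ "{0}"], simp)
      apply (rule exI[of _ "{1}"], rule exI[of _ "{0}"], simp)
      done
    then show ?thesis unfolding opt_def by simp
  qed
  have ne: "is_NE {{0},{1}} ex_a ex_b 1 0 {0} {0}"
    by (auto simp: is_NE_def cost1_def cost2_def pcost_def load_def ex_a_def ex_b_def)
  have soc: "social ex_a ex_b 1 0 {0} {0} = 2"
    by (simp add: social_def cost1_def cost2_def pcost_def load_def ex_a_def ex_b_def)
  have vi: "valid_instance {0,1} ex_a ex_b 1 0"
    by (simp add: valid_instance_def ex_a_def ex_b_def)
  show ?thesis unfolding PoA_ratios_def
    apply (rule CollectI)
    apply (rule exI[of _ "{0,1}"], rule exI[of _ ex_tail], rule exI[of _ ex_head],
       rule exI[of _ ex_a], rule exI[of _ ex_b], rule exI[of _ 1], rule exI[of _ 0],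
       rule exI[of _ 0], rule exI[of _ 1], rule exI[of _ "{0}"], rule exI[of _ "{0}"])
    using ex_acts opt1 ne soc vi by simp
qed

theorem theorem4:
  shows "(SUP x\<in>PoA_ratios. ereal x) = 2"
proof (rule antisym)
  show "(SUP x\<in>PoA_ratios. ereal x) \<le> 2"
  proof (rule SUP_least)
    fix x assume "x \<in> PoA_ratios"
    then have "x \<le> 2" unfolding PoA_ratios_def using ratio_le by blast
    then show "ereal x \<le> 2" by simp
  qed
next
  have "ereal 2 \<le> (SUP x\<in>PoA_ratios. ereal x)" using two_in by (rule SUP_upper)
  then show "2 \<le> (SUP x\<in>PoA_ratios. ereal x)" by simp
qed

end
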